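(* Let $d\ge2$, $n\ge1$, let $H$ be a Hermitian operator on $(\mathbb{C}^d)^{\otimes n}$ and let $O$ be a linear operator with $\|O\|_2=1$. Then $|R_I(H,O)|\le4n\|H\|_\infty$.
   Context: Let $V=\mathbb{Z}_d\times\mathbb{Z}_d$; for $a=(s,t)\in V$, $P_a=X^sZ^t$ with $X|j\rangle=|j+1\bmod d\rangle$, $Z|j\rangle=e^{2\pi ij/d}|j\rangle$; $P_{\vec a}=\bigotimes_iP_{a_i}$, $|\vec a|=\#\{i:a_i\ne(0,0)\}$. $\|A\|_2=(d^{-n}\mathrm{Tr}(A^\dagger A))^{1/2}$. For $\|O\|_2=1$, $P_O[\vec a]=d^{-2n}|\mathrm{Tr}(OP_{\vec a})|^2$ and $I[O]=\sum_{\vec a}|\vec a|P_O[\vec a]$. The influence rate is $R_I(H,O)=\frac{d}{dt}I[U_tOU_t^\dagger]\big|_{t=0}$ with $U_t=e^{-itH}$; $\|\cdot\|_\infty$ is the operator norm. *)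

theory Defs
  imports "HOL-Analysis.Analysis"
begin

text \<open>Operators on (C^d)^{tensor n} are represented as matrices indexed by
configurations x :: nat \<Rightarrow> nat with x i < d for i < n (restricted
functions, PiE). Only entries on cfg d n matter.\<close>

type_synonym qop = "(nat \<Rightarrow> nat) \<Rightarrow> (nat \<Rightarrow> nat) \<Rightarrow> complex"

definition cfg :: "nat \<Rightarrow> nat \<Rightarrow> (nat \<Rightarrow> nat) set" where
  "cfg d n = PiE {..<n} (\<lambda>_. {..<d})"

definition mmul :: "nat \<Rightarrow> nat \<Rightarrow> qop \<Rightarrow> qop \<Rightarrow> qop" where
  "mmul d n A B = (\<lambda>x y. \<Sum>z\<in>cfg d n. A x z * B z y)"

definition madj :: "qop \<Rightarrow> qop" where
  "madj A = (\<lambda>x y. cnj (A y x))"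

definition mtrace :: "nat \<Rightarrow> nat \<Rightarrow> qop \<Rightarrow> complex" where
  "mtrace d n A = (\<Sum>x\<in>cfg d n. A x x)"

definition mid :: qop where
  "mid = (\<lambda>x y. if x = y then 1 else 0)"

fun mpow :: "nat \<Rightarrow> nat \<Rightarrow> qop \<Rightarrow> nat \<Rightarrow> qop" where
  "mpow d n A 0 = mid"
| "mpow d n A (Suc k) = mmul d n A (mpow d n A k)"

definition mexp :: "nat \<Rightarrow> nat \<Rightarrow> qop \<Rightarrow> qop" where
  "mexp d n A = (\<lambda>x y. \<Sum>k. mpow d n A k x y / of_nat (fact k))"

definition evol :: "nat \<Rightarrow> nat \<Rightarrow> qop \<Rightarrow> real \<Rightarrow> qop" where
  "evol d n H t = mexp d n (\<lambda>x y. - (\<i> * of_real t) * H x y)"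

definition hermitian :: "nat \<Rightarrow> nat \<Rightarrow> qop \<Rightarrow> bool" where
  "hermitian d n H \<longleftrightarrow> (\<forall>x\<in>cfg d n. \<forall>y\<in>cfg d n. H x y = cnj (H y x))"

definition omega :: "nat \<Rightarrow> complex" where
  "omega d = exp (2 * of_real pi * \<i> / of_nat d)"

text \<open>Single-site X^s Z^t: (X^s Z^t)|k> = omega^(t k) |k+s mod d>.\<close>
definition pauli1 :: "nat \<Rightarrow> nat \<times> nat \<Rightarrow> nat \<Rightarrow> nat \<Rightarrow> complex" where
  "pauli1 d a j k = (if j = (k + fst a) mod d then omega d ^ (snd a * k) else 0)"

definition pauli :: "nat \<Rightarrow> nat \<Rightarrow> (nat \<Rightarrow> nat \<times> nat) \<Rightarrow> qop" where
  "pauli d n a = (\<lambda>x y. \<Prod>i<n. pauli1 d (a i) (x i) (y i))"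

definition labels :: "nat \<Rightarrow> nat \<Rightarrow> (nat \<Rightarrow> nat \<times> nat) set" where
  "labels d n = PiE {..<n} (\<lambda>_. {..<d} \<times> {..<d})"

definition weight :: "nat \<Rightarrow> (nat \<Rightarrow> nat \<times> nat) \<Rightarrow> nat" where
  "weight n a = card {i\<in>{..<n}. a i \<noteq> (0, 0)}"

definition hs_norm :: "nat \<Rightarrow> nat \<Rightarrow> qop \<Rightarrow> real" where
  "hs_norm d n A = sqrt (Re (mtrace d n (mmul d n (madj A) A)) / real d ^ n)"

definition pauli_weight :: "nat \<Rightarrow> nat \<Rightarrow> qop \<Rightarrow> (nat \<Rightarrow> nat \<times> nat) \<Rightarrow> real" where
  "pauli_weight d n Op a = (cmod (mtrace d n (mmul d n Op (pauli d n a))))\<^sup>2 / real d ^ (2 * n)"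

definition influence :: "nat \<Rightarrow> nat \<Rightarrow> qop \<Rightarrow> real" where
  "influence d n Op = (\<Sum>a\<in>labels d n. real (weight n a) * pauli_weight d n Op a)"

definition vnorm :: "nat \<Rightarrow> nat \<Rightarrow> ((nat \<Rightarrow> nat) \<Rightarrow> complex) \<Rightarrow> real" where
  "vnorm d n v = sqrt (\<Sum>x\<in>cfg d n. (cmod (v x))\<^sup>2)"

definition mvmul :: "nat \<Rightarrow> nat \<Rightarrow> qop \<Rightarrow> ((nat \<Rightarrow> nat) \<Rightarrow> complex) \<Rightarrow> ((nat \<Rightarrow> nat) \<Rightarrow> complex)" where
  "mvmul d n A v = (\<lambda>x. \<Sum>y\<in>cfg d n. A x y * v y)"

definition op_norm :: "nat \<Rightarrow> nat \<Rightarrow> qop \<Rightarrow> real" where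
  "op_norm d n A = Sup {vnorm d n (mvmul d n A v) | v. vnorm d n v = 1}"

text \<open>t \<mapsto> I[U_t O U_t^dagger]; the influence rate is its derivative at 0.\<close>
definition influence_traj :: "nat \<Rightarrow> nat \<Rightarrow> qop \<Rightarrow> qop \<Rightarrow> real \<Rightarrow> real" where
  "influence_traj d n H Op t =
     influence d n (mmul d n (mmul d n (evol d n H t) Op) (madj (evol d n H t)))"

end

theory Submission
  imports Defs
begin


lemma fin_cfg[simp]: "finite (cfg d n)"
  by (simp add: cfg_def finite_PiE)

lemma fin_labels[simp]: "finite (labels d n)"
  by (simp add: labels_def finite_PiE)

lemma mpow_scale: "mpow d n (\<lambda>x y. c * A x y) k = (\<lambda>x y. c ^ k * mpow d n A k x y)"
  by (induction k) (auto simp: mmul_def mid_def sum_distrib_left mult_ac)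

lemma mpow_bound:
  assumes "x \<in> cfg d n"
  shows "cmod (mpow d n A k x z) \<le> (\<Sum>x\<in>cfg d n. \<Sum>y\<in>cfg d n. cmod (A x y)) ^ k"
  using assms
proof (induction k arbitrary: x)
  case 0 then show ?case by (simp add: mid_def)
next
  case (Suc k)
  define M where "M = (\<Sum>x\<in>cfg d n. \<Sum>y\<in>cfg d n. cmod (A x y))"
  have M0: "0 \<le> M ^ k" unfolding M_def by (simp add: sum_nonneg)
  have rowM: "(\<Sum>w\<in>cfg d n. cmod (A x w)) \<le> M"
    unfolding M_def using Suc.prems
    by (intro member_le_sum) (auto intro: sum_nonneg)
  have "cmod (mpow d n A (Suc k) x z) \<le> (\<Sum>w\<in>cfg d n. cmod (A x w) * cmod (mpow d n A k w z))"
    by (simp add: mmul_def) (metis (no_types, lifting) norm_mult norm_sum sum.cong)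
  also have "\<dots> \<le> (\<Sum>w\<in>cfg d n. cmod (A x w) * M ^ k)"
    by (intro sum_mono mult_left_mono) (auto simp: Suc.IH M_def)
  also have "\<dots> \<le> M * M ^ k"
    by (simp add: sum_distrib_right[symmetric] mult_right_mono rowM M0)
  finally show ?case by (simp add: M_def)
qed

definition bco :: "nat \<Rightarrow> nat \<Rightarrow> qop \<Rightarrow> (nat\<Rightarrow>nat) \<Rightarrow> (nat\<Rightarrow>nat) \<Rightarrow> nat \<Rightarrow> complex" where
  "bco d n H x z k = (- \<i>) ^ k * mpow d n H k x z / of_nat (fact k)"

lemma tpow: "\<And>k. (- (\<i> * of_real t)) ^ k = (-\<i>)^k * (of_real t :: complex)^k"
    by (simp add: power_mult_distrib[symmetric])

lemma evol_series:
  "evol d n H t x z = (\<Sum>k. bco d n H x z k * (of_real t) ^ k)"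
proof -
  have "(\<Sum>k. mpow d n (\<lambda>x y. - (\<i> * of_real t) * H x y) k x z / of_nat (fact k)) = (\<Sum>k. bco d n H x z k * (of_real t) ^ k)"
    unfolding mpow_scale tpow bco_def
    apply (rule arg_cong[where f=suminf])
    apply (rule ext)
    by (simp add: mult_ac)
  then show ?thesis by (simp add: evol_def mexp_def)
qed

lemma bco_summable:
  assumes "x \<in> cfg d n"
  shows "summable (\<lambda>k. bco d n H x z k * y ^ k)"
proof -
  define M where "M = (\<Sum>x\<in>cfg d n. \<Sum>y\<in>cfg d n. cmod (H x y))"
  have M0: "0 \<le> M" unfolding M_def by (simp add: sum_nonneg)
  have S: "summable (\<lambda>k. inverse (fact k) * (M * cmod y) ^ k)"
    by (rule summable_exp)
  have B: "norm (bco d n H x z k * y ^ k) \<le> inverse (fact k) * (M * cmod y) ^ k" for k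
  proof -
    have "norm (bco d n H x z k * y ^ k) = cmod (mpow d n H k x z) * cmod y ^ k / fact k"
      by (simp add: bco_def norm_mult norm_divide norm_power)
    also have "\<dots> \<le> M ^ k * cmod y ^ k / fact k"
      using mpow_bound[OF assms, of H k z] unfolding M_def
      by (intro divide_right_mono mult_right_mono) auto
    finally show ?thesis by (simp add: power_mult_distrib divide_inverse mult_ac)
  qed
  show ?thesis
    by (rule summable_comparison_test'[where N=0, OF S B])
qed

lemma mpow1: "z \<in> cfg d n \<Longrightarrow> mmul d n H mid x z = H x z"
proof -
  assume z: "z \<in> cfg d n"
  have "mmul d n H mid x z = (\<Sum>za\<in>cfg d n. if za = z then H x za else 0)"
    unfolding mmul_def by (rule sum.cong) (auto simp: mid_def)
  also have "\<dots> = H x z" using z by simp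
  finally show ?thesis .
qed

lemma evol_deriv:
  assumes "x \<in> cfg d n" "z \<in> cfg d n"
  shows "((\<lambda>t. evol d n H t x z) has_vector_derivative (- \<i> * H x z)) (at 0)"
proof -
  have "((\<lambda>s. \<Sum>k. bco d n H x z k * s ^ k) has_field_derivative
          (\<Sum>k. diffs (bco d n H x z) k * 0 ^ k)) (at 0)"
    by (rule termdiffs_strong_converges_everywhere) (rule bco_summable[OF assms(1)])
  moreover have "(\<Sum>k. diffs (bco d n H x z) k * 0 ^ k) = - \<i> * H x z"
  proof -
    have "(\<Sum>k. diffs (bco d n H x z) k * 0 ^ k) = diffs (bco d n H x z) 0" by (rule powser_zero)
    also have "\<dots> = bco d n H x z 1" by (simp add: diffs_def)
    also have "\<dots> = - \<i> * mmul d n H mid x z" by (simp add: bco_def)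
    finally show ?thesis by (simp only: mpow1[OF assms(2)])
  qed
  ultimately have "((\<lambda>s. \<Sum>k. bco d n H x z k * s ^ k) has_field_derivative (- \<i> * H x z)) (at (of_real 0))"
    by simp
  from has_vector_derivative_real_field[OF this]
  show ?thesis unfolding evol_series .
qed

lemma evol_zero: "evol d n H 0 x z = mid x z"
  unfolding evol_series using powser_zero[of "bco d n H x z"] by (simp add: bco_def)



lemma sum_mid_left: "x \<in> cfg d n \<Longrightarrow> (\<Sum>z\<in>cfg d n. mid x z * f z) = f x"
proof -
  assume x: "x \<in> cfg d n"
  have "(\<Sum>z\<in>cfg d n. mid x z * f z) = (\<Sum>z\<in>cfg d n. if x = z then f z else 0)"
    by (rule sum.cong) (auto simp: mid_def)
  also have "\<dots> = f x" using x by simp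
  finally show ?thesis .
qed

lemma sum_mid_right: "y \<in> cfg d n \<Longrightarrow> (\<Sum>w\<in>cfg d n. f w * cnj (mid y w)) = f y"
proof -
  assume y: "y \<in> cfg d n"
  have "(\<Sum>w\<in>cfg d n. f w * cnj (mid y w)) = (\<Sum>w\<in>cfg d n. if y = w then f w else 0)"
    by (rule sum.cong) (auto simp: mid_def)
  also have "\<dots> = f y" using y by simp
  finally show ?thesis .
qed

definition Wt :: "nat \<Rightarrow> nat \<Rightarrow> qop \<Rightarrow> qop \<Rightarrow> real \<Rightarrow> qop" where
  "Wt d n H Op t = mmul d n (mmul d n (evol d n H t) Op) (madj (evol d n H t))"

definition Dm :: "nat \<Rightarrow> nat \<Rightarrow> qop \<Rightarrow> qop \<Rightarrow> qop" where
  "Dm d n H Op = (\<lambda>x y. (\<Sum>z\<in>cfg d n. (- \<i> * H x z) * Op z y) + (\<Sum>w\<in>cfg d n. Op x w * cnj (- \<i> * H y w)))"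

definition Tr :: "nat \<Rightarrow> nat \<Rightarrow> qop \<Rightarrow> (nat \<Rightarrow> nat \<times> nat) \<Rightarrow> complex" where
  "Tr d n X a = (\<Sum>x\<in>cfg d n. \<Sum>z\<in>cfg d n. X x z * pauli d n a z x)"

lemma Tr_eq: "mtrace d n (mmul d n X (pauli d n a)) = Tr d n X a"
  by (simp add: mtrace_def mmul_def Tr_def)

lemma Wt0: "x \<in> cfg d n \<Longrightarrow> y \<in> cfg d n \<Longrightarrow> Wt d n H Op 0 x y = Op x y"
  by (simp add: Wt_def mmul_def madj_def evol_zero sum_mid_left sum_mid_right)

lemma Wt_deriv:
  assumes x: "x \<in> cfg d n" and y: "y \<in> cfg d n"
  shows "((\<lambda>t. Wt d n H Op t x y) has_vector_derivative Dm d n H Op x y) (at 0)"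
proof -
  have "((\<lambda>t. \<Sum>w\<in>cfg d n. (\<Sum>z\<in>cfg d n. evol d n H t x z * Op z w) * cnj (evol d n H t y w))
     has_vector_derivative
     (\<Sum>w\<in>cfg d n. (\<Sum>z\<in>cfg d n. evol d n H 0 x z * Op z w) * cnj (- \<i> * H y w)
        + (\<Sum>z\<in>cfg d n. (- \<i> * H x z) * Op z w) * cnj (evol d n H 0 y w))) (at 0)"
    using x y
    by (intro has_vector_derivative_mult has_vector_derivative_sum has_vector_derivative_mult_left
        has_vector_derivative_cnj evol_deriv) auto
  moreover have "(\<Sum>w\<in>cfg d n. (\<Sum>z\<in>cfg d n. evol d n H 0 x z * Op z w) * cnj (- \<i> * H y w)
        + (\<Sum>z\<in>cfg d n. (- \<i> * H x z) * Op z w) * cnj (evol d n H 0 y w)) = Dm d n H Op x y"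
    using x y by (simp add: evol_zero sum.distrib sum_mid_left sum_mid_right Dm_def)
  ultimately show ?thesis by (simp add: Wt_def mmul_def madj_def)
qed

lemma Tr_deriv:
  "((\<lambda>t. Tr d n (Wt d n H Op t) a) has_vector_derivative Tr d n (Dm d n H Op) a) (at 0)"
  unfolding Tr_def
  by (intro has_vector_derivative_sum has_vector_derivative_mult_left Wt_deriv)

lemma cmod2_deriv:
  fixes g :: "real \<Rightarrow> complex"
  assumes "(g has_vector_derivative g') (at 0)"
  shows "((\<lambda>t. (cmod (g t))\<^sup>2) has_real_derivative 2 * Re (cnj (g 0) * g')) (at 0)"
proof -
  have e: "(cmod z)\<^sup>2 = Re (z * cnj z)" for z
    by (metis Re_complex_of_real complex_norm_square)
  have "((\<lambda>t. g t * cnj (g t)) has_vector_derivative (g 0 * cnj g' + g' * cnj (g 0))) (at 0)"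
    by (intro has_vector_derivative_mult has_vector_derivative_cnj assms)
  from bounded_linear.has_vector_derivative[OF bounded_linear_Re this]
  have "((\<lambda>t. Re (g t * cnj (g t))) has_vector_derivative Re (g 0 * cnj g' + g' * cnj (g 0))) (at 0)" .
  moreover have "Re (g 0 * cnj g' + g' * cnj (g 0)) = 2 * Re (cnj (g 0) * g')"
    by simp
  ultimately show ?thesis
    unfolding e has_real_derivative_iff_has_vector_derivative by (simp add: algebra_simps)
qed

lemma traj_deriv:
  "(influence_traj d n H Op has_real_derivative
     (\<Sum>a\<in>labels d n. real (weight n a) * (2 * Re (cnj (Tr d n Op a) * Tr d n (Dm d n H Op) a) / real d ^ (2 * n)))) (at 0)"
proof -
  have f: "influence_traj d n H Op = (\<lambda>t. \<Sum>a\<in>labels d n. real (weight n a) * ((cmod (Tr d n (Wt d n H Op t) a))\<^sup>2 / real d ^ (2 * n)))"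
    by (simp add: fun_eq_iff influence_traj_def influence_def pauli_weight_def Tr_eq Wt_def)
  have T0: "Tr d n (Wt d n H Op 0) a = Tr d n Op a" for a
    unfolding Tr_def by (intro sum.cong refl) (simp add: Wt0)
  have D: "((\<lambda>t. (cmod (Tr d n (Wt d n H Op t) a))\<^sup>2) has_real_derivative 2 * Re (cnj (Tr d n Op a) * Tr d n (Dm d n H Op) a)) (at 0)" for a
    using cmod2_deriv[OF Tr_deriv, of d n H Op a] unfolding T0 .
  show ?thesis unfolding f
    by (intro DERIV_sum DERIV_cmult DERIV_cdivide D)
qed



lemma omega_pow: "omega d ^ m = exp (of_real (2 * pi * real m / real d) * \<i>)"
proof -
  have "omega d ^ m = exp (of_nat m * (2 * of_real pi * \<i> / of_nat d))"
    by (simp only: omega_def exp_of_nat_mult)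
  also have "of_nat m * (2 * of_real pi * \<i> / of_nat d) = of_real (2 * pi * real m / real d) * \<i>"
    by simp
  finally show ?thesis .
qed

lemma omega_norm: "cmod (omega d) = 1"
  by (simp add: omega_def)

lemma omega_d: "d \<ge> 1 \<Longrightarrow> omega d ^ d = 1"
  unfolding omega_pow by (simp add: exp_eq_1)

lemma omega_ne1: assumes "0 < m" "m < d" shows "omega d ^ m \<noteq> 1"
proof
  assume "omega d ^ m = 1"
  then obtain k :: int where k: "2 * pi * real m / real d = of_int (2 * k) * pi"
    unfolding omega_pow exp_eq_1 by auto
  then have "real m = real d * of_int k" using assms by (simp add: field_simps)
  then have "real m / real d = of_int k" using assms by simp
  moreover have "0 < real m / real d" "real m / real d < 1" using assms by auto
  ultimately show False by (metis of_int_0_less_iff of_int_less_1_iff not_le zero_less_iff_neq_zero int_one_le_iff_zero_less order_less_irrefl zless_imp_add1_zle add_0 )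
qed

lemma omega_cnj: "omega d ^ m * cnj (omega d) ^ m = 1"
proof -
  have "omega d * cnj (omega d) = 1"
    using complex_norm_square[of "omega d"] omega_norm[of d] by simp
  then show ?thesis by (metis power_mult_distrib power_one)
qed

lemma omega_sum:
  assumes d: "d \<ge> 1" and k: "k < d" and k': "k' < d"
  shows "(\<Sum>t<d. omega d ^ (t * k) * cnj (omega d ^ (t * k'))) = (if k = k' then of_nat d else 0)"
proof -
  define q where "q = omega d ^ k * cnj (omega d) ^ k'"
  have tq: "omega d ^ (t * k) * cnj (omega d ^ (t * k')) = q ^ t" for t
    by (simp add: q_def power_mult_distrib power_mult mult.commute[of t])
  have qd: "q ^ d = 1"
  proof -
    have "q ^ d = (omega d ^ d) ^ k * cnj (omega d ^ d) ^ k'"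
      by (simp add: q_def power_mult_distrib flip: power_mult) (simp add: mult.commute)
    then show ?thesis using omega_d[OF d] by simp
  qed
  show ?thesis
  proof (cases "k = k'")
    case True
    then have "q = 1" using omega_cnj by (simp add: q_def)
    then show ?thesis using True tq by simp
  next
    case False
    have "q \<noteq> 1"
    proof (cases "k' < k")
      case True
      have "q = omega d ^ (k - k') * (omega d ^ k' * cnj (omega d) ^ k')"
        using True by (simp add: q_def mult.assoc flip: power_add)
      then have "q = omega d ^ (k - k')" using omega_cnj by simp
      then show ?thesis using omega_ne1[of "k - k'" d] True k by simp
    next
      case False2: False
      with False have lt: "k < k'" by simp
      have "q = cnj (omega d) ^ (k' - k) * (omega d ^ k * cnj (omega d) ^ k)"
        using lt by (simp add: q_def mult_ac flip: power_add)
      then have "q = cnj (omega d ^ (k' - k))" using omega_cnj by simp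
      then show ?thesis using omega_ne1[of "k' - k" d] lt k' 
        by (metis complex_cnj_cancel_iff complex_cnj_one diff_less_mono zero_less_diff diff_le_self le_less_trans less_imp_diff_less)
    qed
    then have "(\<Sum>t<d. q ^ t) = 0" using geometric_sum[of q d] qd by simp
    then show ?thesis using False tq by simp
  qed
qed



lemma mod_shift_iff:
  fixes d j k s :: nat
  assumes "s < d" "j < d" "k < d"
  shows "(j = (k + s) mod d) \<longleftrightarrow> (s = (j + d - k) mod d)"
proof (cases "k + s < d")
  case True
  then show ?thesis using assms
    by (cases "k \<le> j") (auto simp: mod_if le_mod_geq)
next
  case False
  then show ?thesis using assms
    by (cases "k \<le> j") (auto simp: mod_if le_mod_geq)
qed

lemma site_sum:
  assumes d: "d \<ge> 1" and lt: "j < d" "k < d" "j' < d" "k' < d"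
  shows "(\<Sum>c\<in>{..<d}\<times>{..<d}. pauli1 d c j k * cnj (pauli1 d c j' k'))
         = (if j = j' \<and> k = k' then of_nat d else 0)"
proof -
  have "(\<Sum>c\<in>{..<d}\<times>{..<d}. pauli1 d c j k * cnj (pauli1 d c j' k'))
      = (\<Sum>s<d. \<Sum>t<d. pauli1 d (s, t) j k * cnj (pauli1 d (s, t) j' k'))"
    by (simp add: sum.cartesian_product)
  also have "\<dots> = (\<Sum>s<d. if j = (k + s) mod d \<and> j' = (k' + s) mod d
                    then (\<Sum>t<d. omega d ^ (t * k) * cnj (omega d ^ (t * k'))) else 0)"
    by (intro sum.cong refl) (auto simp: pauli1_def mult.commute)
  also have "\<dots> = (\<Sum>s<d. if j = (k + s) mod d \<and> j' = (k' + s) mod d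
                    then (if k = k' then of_nat d else 0) else 0)"
    unfolding omega_sum[OF d lt(2) lt(4)] ..
  also have "\<dots> = (if j = j' \<and> k = k' then of_nat d else 0)"
  proof (cases "k = k' \<and> j = j'")
    case True
    have "(\<Sum>s<d. if j = (k + s) mod d \<and> j' = (k' + s) mod d
                    then (if k = k' then of_nat d else 0) else (0::complex))
          = (\<Sum>s<d. if s = (j + d - k) mod d then of_nat d else 0)"
      using True lt by (intro sum.cong refl) (simp add: mod_shift_iff)
    also have "\<dots> = of_nat d" using d by simp
    finally show ?thesis using True by simp
  next
    case False
    then show ?thesis by (auto intro!: sum.neutral)
  qed
  finally show ?thesis .
qed

lemma cfg_lt: "x \<in> cfg d n \<Longrightarrow> i < n \<Longrightarrow> x i < d"
  by (auto simp: cfg_def PiE_def Pi_def)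

lemma cfg_eq: "x \<in> cfg d n \<Longrightarrow> x' \<in> cfg d n \<Longrightarrow> (\<forall>i<n. x i = x' i) \<longleftrightarrow> x = x'"
  by (auto simp: cfg_def PiE_def extensional_def fun_eq_iff) (metis lessThan_iff)

lemma prod_if_const:
  "(\<Prod>i<n. if P i then (c::complex) else 0) = (if (\<forall>i<n. P i) then c ^ n else 0)"
proof (cases "\<forall>i<n. P i")
  case True
  then have "(\<Prod>i<n. if P i then (c::complex) else 0) = (\<Prod>i<n. c)" by (intro prod.cong) auto
  then show ?thesis using True by simp
next
  case False
  then show ?thesis by (auto intro!: prod_zero)
qed

lemma pauli_orth:
  assumes d: "d \<ge> 1" and xy: "x \<in> cfg d n" "y \<in> cfg d n" "x' \<in> cfg d n" "y' \<in> cfg d n"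
  shows "(\<Sum>a\<in>labels d n. pauli d n a y x * cnj (pauli d n a y' x'))
         = (if x = x' \<and> y = y' then of_nat d ^ n else 0)"
proof -
  have "(\<Sum>a\<in>labels d n. pauli d n a y x * cnj (pauli d n a y' x'))
      = (\<Sum>a\<in>labels d n. \<Prod>i<n. pauli1 d (a i) (y i) (x i) * cnj (pauli1 d (a i) (y' i) (x' i)))"
    by (simp add: pauli_def prod.distrib)
  also have "\<dots> = (\<Prod>i<n. \<Sum>c\<in>{..<d}\<times>{..<d}. pauli1 d c (y i) (x i) * cnj (pauli1 d c (y' i) (x' i)))"
    unfolding labels_def by (rule prod_sum_PiE[symmetric]) auto
  also have "\<dots> = (\<Prod>i<n. if y i = y' i \<and> x i = x' i then of_nat d else 0)"
    using xy by (intro prod.cong refl site_sum[OF d]) (auto intro: cfg_lt)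
  also have "\<dots> = (if (\<forall>i<n. y i = y' i \<and> x i = x' i) then of_nat d ^ n else 0)"
    by (rule prod_if_const)
  also have "(\<forall>i<n. y i = y' i \<and> x i = x' i) \<longleftrightarrow> x = x' \<and> y = y'"
    using cfg_eq[OF xy(1) xy(3)] cfg_eq[OF xy(2) xy(4)] by blast
  finally show ?thesis .
qed

lemma parseval:
  assumes d: "d \<ge> 1"
  shows "(\<Sum>a\<in>labels d n. (cmod (Tr d n X a))\<^sup>2)
       = real d ^ n * (\<Sum>p\<in>cfg d n \<times> cfg d n. (cmod (X (fst p) (snd p)))\<^sup>2)"
proof -
  define C where "C = cfg d n \<times> cfg d n"
  define f where "f a p = X (fst p) (snd p) * pauli d n a (snd p) (fst p)" for a p
  have Trf: "Tr d n X a = (\<Sum>p\<in>C. f a p)" for a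
    by (simp add: Tr_def C_def f_def sum.cartesian_product case_prod_beta)
  have inner: "(\<Sum>a\<in>labels d n. f a p * cnj (f a q))
        = (if p = q then of_nat d ^ n * (X (fst p) (snd p) * cnj (X (fst p) (snd p))) else 0)"
    if "p \<in> C" "q \<in> C" for p q
  proof -
    have "(\<Sum>a\<in>labels d n. f a p * cnj (f a q))
        = X (fst p) (snd p) * cnj (X (fst q) (snd q)) *
          (\<Sum>a\<in>labels d n. pauli d n a (snd p) (fst p) * cnj (pauli d n a (snd q) (fst q)))"
      by (simp add: f_def sum_distrib_left mult_ac)
    also have "\<dots> = X (fst p) (snd p) * cnj (X (fst q) (snd q)) *
          (if fst p = fst q \<and> snd p = snd q then of_nat d ^ n else 0)"
      using that by (subst pauli_orth[OF d]) (auto simp: C_def)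
    finally show ?thesis by (auto simp: prod_eq_iff)
  qed
  have "complex_of_real (\<Sum>a\<in>labels d n. (cmod (Tr d n X a))\<^sup>2)
      = (\<Sum>a\<in>labels d n. Tr d n X a * cnj (Tr d n X a))"
    by (simp only: of_real_sum complex_norm_square)
  also have "\<dots> = (\<Sum>a\<in>labels d n. \<Sum>p\<in>C. \<Sum>q\<in>C. f a p * cnj (f a q))"
    by (simp add: Trf sum_product)
  also have "\<dots> = (\<Sum>p\<in>C. \<Sum>q\<in>C. \<Sum>a\<in>labels d n. f a p * cnj (f a q))"
    by (subst sum.swap) (simp add: sum.swap[of _ "labels d n"])
  also have "\<dots> = (\<Sum>p\<in>C. \<Sum>q\<in>C. if p = q then of_nat d ^ n * (X (fst p) (snd p) * cnj (X (fst p) (snd p))) else 0)"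
    by (intro sum.cong refl inner)
  also have "\<dots> = (\<Sum>p\<in>C. of_nat d ^ n * (X (fst p) (snd p) * cnj (X (fst p) (snd p))))"
    by (simp add: C_def)
  also have "\<dots> = (\<Sum>p\<in>C. of_nat d ^ n * complex_of_real ((cmod (X (fst p) (snd p)))\<^sup>2))"
    by (simp only: complex_norm_square)
  also have "\<dots> = complex_of_real (real d ^ n * (\<Sum>p\<in>C. (cmod (X (fst p) (snd p)))\<^sup>2))"
    by (simp add: sum_distrib_left)
  finally show ?thesis unfolding C_def of_real_eq_iff .
qed



lemma vnorm_L2: "vnorm d n v = L2_set (\<lambda>x. cmod (v x)) (cfg d n)"
  by (simp add: vnorm_def L2_set_def)

lemma mv_bound_K:
  "vnorm d n (mvmul d n H v) \<le> L2_set (\<lambda>x. L2_set (\<lambda>y. cmod (H x y)) (cfg d n)) (cfg d n) * vnorm d n v"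
proof -
  have pt: "cmod (mvmul d n H v x) \<le> L2_set (\<lambda>y. cmod (H x y)) (cfg d n) * vnorm d n v" for x
  proof -
    have "cmod (mvmul d n H v x) \<le> (\<Sum>y\<in>cfg d n. cmod (H x y) * cmod (v y))"
      unfolding mvmul_def by (rule order_trans[OF norm_sum]) (simp add: norm_mult)
    also have "\<dots> = (\<Sum>y\<in>cfg d n. \<bar>cmod (H x y)\<bar> * \<bar>cmod (v y)\<bar>)" by simp
    also have "\<dots> \<le> L2_set (\<lambda>y. cmod (H x y)) (cfg d n) * vnorm d n v"
      unfolding vnorm_L2 by (rule L2_set_mult_ineq)
    finally show ?thesis .
  qed
  have "vnorm d n (mvmul d n H v) \<le> L2_set (\<lambda>x. L2_set (\<lambda>y. cmod (H x y)) (cfg d n) * vnorm d n v) (cfg d n)"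
    unfolding vnorm_L2[of _ _ "mvmul d n H v"] by (rule L2_set_mono) (auto simp: pt)
  also have "\<dots> = L2_set (\<lambda>x. L2_set (\<lambda>y. cmod (H x y)) (cfg d n)) (cfg d n) * vnorm d n v"
    by (rule L2_set_left_distrib[symmetric]) (simp add: vnorm_L2)
  finally show ?thesis .
qed

lemma op_bound: "vnorm d n (mvmul d n H v) \<le> op_norm d n H * vnorm d n v"
proof (cases "vnorm d n v = 0")
  case True
  then have "\<forall>y\<in>cfg d n. v y = 0" unfolding vnorm_L2 by (simp add: L2_set_eq_0_iff)
  then have "mvmul d n H v = (\<lambda>x. 0)" by (simp add: mvmul_def fun_eq_iff)
  then show ?thesis using True by (simp add: vnorm_def)
next
  case False
  define r where "r = vnorm d n v"
  have "r \<ge> 0" unfolding r_def vnorm_L2 by simp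
  with False have r: "r > 0" by (simp add: r_def)
  define u where "u = (\<lambda>y. v y / of_real r)"
  have "vnorm d n u = L2_set (\<lambda>y. cmod (v y) * (1 / r)) (cfg d n)"
    unfolding vnorm_L2 u_def using r by (simp add: norm_divide)
  also have "\<dots> = L2_set (\<lambda>y. cmod (v y)) (cfg d n) * (1 / r)"
    by (rule L2_set_left_distrib[symmetric]) (use r in simp)
  also have "\<dots> = r * (1 / r)" unfolding r_def vnorm_L2 ..
  finally have u1: "vnorm d n u = 1" using r by simp
  have Hu: "mvmul d n H u = (\<lambda>x. mvmul d n H v x / of_real r)"
    by (simp add: mvmul_def u_def sum_divide_distrib fun_eq_iff)
  have "vnorm d n (mvmul d n H u) = L2_set (\<lambda>x. cmod (mvmul d n H v x) * (1 / r)) (cfg d n)"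
    unfolding vnorm_L2 Hu using r by (simp add: norm_divide)
  also have "\<dots> = L2_set (\<lambda>x. cmod (mvmul d n H v x)) (cfg d n) * (1 / r)"
    by (rule L2_set_left_distrib[symmetric]) (use r in simp)
  also have "\<dots> = vnorm d n (mvmul d n H v) / r"
    unfolding vnorm_L2 by simp
  finally have eq: "vnorm d n (mvmul d n H u) = vnorm d n (mvmul d n H v) / r" .
  have bdd: "bdd_above {vnorm d n (mvmul d n H v) | v. vnorm d n v = 1}"
  proof (rule bdd_aboveI[where M="L2_set (\<lambda>x. L2_set (\<lambda>y. cmod (H x y)) (cfg d n)) (cfg d n)"])
    fix x assume "x \<in> {vnorm d n (mvmul d n H v) | v. vnorm d n v = 1}"
    then obtain w where "x = vnorm d n (mvmul d n H w)" "vnorm d n w = 1" by blast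
    then show "x \<le> L2_set (\<lambda>x. L2_set (\<lambda>y. cmod (H x y)) (cfg d n)) (cfg d n)"
      using mv_bound_K[of d n H w] by simp
  qed
  have "vnorm d n (mvmul d n H u) \<le> op_norm d n H"
    unfolding op_norm_def using u1 by (intro cSup_upper bdd) auto
  then have "vnorm d n (mvmul d n H v) / r \<le> op_norm d n H" using eq by simp
  then show ?thesis using r by (simp add: r_def divide_le_eq mult.commute)
qed

lemma op_bound_sq: "(vnorm d n (mvmul d n H v))\<^sup>2 \<le> (op_norm d n H)\<^sup>2 * (vnorm d n v)\<^sup>2"
proof -
  have "0 \<le> vnorm d n (mvmul d n H v)" by (simp add: vnorm_L2)
  then have "(vnorm d n (mvmul d n H v))\<^sup>2 \<le> (op_norm d n H * vnorm d n v)\<^sup>2"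
    using op_bound by (intro power_mono) auto
  then show ?thesis by (simp add: power_mult_distrib)
qed

lemma vnorm_sq: "(vnorm d n v)\<^sup>2 = (\<Sum>x\<in>cfg d n. (cmod (v x))\<^sup>2)"
  by (simp add: vnorm_def sum_nonneg)

definition FrS :: "nat \<Rightarrow> nat \<Rightarrow> qop \<Rightarrow> real" where
  "FrS d n X = (\<Sum>x\<in>cfg d n. \<Sum>y\<in>cfg d n. (cmod (X x y))\<^sup>2)"

lemma FrA:
  "FrS d n (\<lambda>x y. \<Sum>z\<in>cfg d n. (- \<i> * H x z) * Op z y) \<le> (op_norm d n H)\<^sup>2 * FrS d n Op"
proof -
  have e: "cmod (\<Sum>z\<in>cfg d n. (- \<i> * H x z) * Op z y) = cmod (mvmul d n H (\<lambda>z. Op z y) x)" for x y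
  proof -
    have "(\<Sum>z\<in>cfg d n. (- \<i> * H x z) * Op z y) = - \<i> * mvmul d n H (\<lambda>z. Op z y) x"
      by (simp add: mvmul_def sum_distrib_left mult_ac)
    then show ?thesis by (simp add: norm_mult)
  qed
  have "FrS d n (\<lambda>x y. \<Sum>z\<in>cfg d n. (- \<i> * H x z) * Op z y)
      = (\<Sum>y\<in>cfg d n. (vnorm d n (mvmul d n H (\<lambda>z. Op z y)))\<^sup>2)"
    unfolding FrS_def vnorm_sq e by (rule sum.swap)
  also have "\<dots> \<le> (\<Sum>y\<in>cfg d n. (op_norm d n H)\<^sup>2 * (vnorm d n (\<lambda>z. Op z y))\<^sup>2)"
    by (intro sum_mono op_bound_sq)
  also have "\<dots> = (op_norm d n H)\<^sup>2 * FrS d n Op"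
    unfolding FrS_def vnorm_sq by (subst sum.swap[of _ "cfg d n"]) (simp add: sum_distrib_left)
  finally show ?thesis .
qed

lemma FrB:
  "FrS d n (\<lambda>x y. \<Sum>w\<in>cfg d n. Op x w * cnj (- \<i> * H y w)) \<le> (op_norm d n H)\<^sup>2 * FrS d n Op"
proof -
  have e: "cmod (\<Sum>w\<in>cfg d n. Op x w * cnj (- \<i> * H y w)) = cmod (mvmul d n H (\<lambda>w. cnj (Op x w)) y)" for x y
  proof -
    have "cmod (\<Sum>w\<in>cfg d n. Op x w * cnj (- \<i> * H y w)) = cmod (cnj (\<Sum>w\<in>cfg d n. Op x w * cnj (- \<i> * H y w)))"
      by (rule complex_mod_cnj[symmetric])
    also have "cnj (\<Sum>w\<in>cfg d n. Op x w * cnj (- \<i> * H y w)) = - \<i> * mvmul d n H (\<lambda>w. cnj (Op x w)) y"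
      by (simp add: mvmul_def sum_distrib_left mult_ac)
    finally show ?thesis by (simp add: norm_mult)
  qed
  have "FrS d n (\<lambda>x y. \<Sum>w\<in>cfg d n. Op x w * cnj (- \<i> * H y w))
      = (\<Sum>x\<in>cfg d n. (vnorm d n (mvmul d n H (\<lambda>w. cnj (Op x w))))\<^sup>2)"
    unfolding FrS_def vnorm_sq e ..
  also have "\<dots> \<le> (\<Sum>x\<in>cfg d n. (op_norm d n H)\<^sup>2 * (vnorm d n (\<lambda>w. cnj (Op x w)))\<^sup>2)"
    by (intro sum_mono op_bound_sq)
  also have "\<dots> = (op_norm d n H)\<^sup>2 * FrS d n Op"
    unfolding FrS_def vnorm_sq by (simp add: sum_distrib_left)
  finally show ?thesis .
qed



lemma FrS_L2: "sqrt (FrS d n X) = L2_set (\<lambda>p. cmod (X (fst p) (snd p))) (cfg d n \<times> cfg d n)"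
  by (simp add: FrS_def L2_set_def sum.cartesian_product case_prod_beta)

lemma L2_Tr:
  assumes "d \<ge> 1"
  shows "L2_set (\<lambda>a. cmod (Tr d n X a)) (labels d n) = sqrt (real d ^ n * FrS d n X)"
  unfolding L2_set_def parseval[OF assms] FrS_def
  by (simp add: sum.cartesian_product case_prod_beta)

lemma op_norm_nonneg:
  assumes "d \<ge> 1" shows "0 \<le> op_norm d n H"
proof -
  define x0 :: "nat \<Rightarrow> nat" where "x0 = (\<lambda>i. if i < n then 0 else undefined)"
  have x0: "x0 \<in> cfg d n" using assms by (auto simp: x0_def cfg_def PiE_def extensional_def)
  define v :: "(nat \<Rightarrow> nat) \<Rightarrow> complex" where "v = (\<lambda>x. if x = x0 then 1 else 0)"
  have "(\<Sum>x\<in>cfg d n. (cmod (v x))\<^sup>2) = (\<Sum>x\<in>cfg d n. if x = x0 then 1 else 0)"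
    by (intro sum.cong) (auto simp: v_def)
  also have "\<dots> = 1" using x0 by simp
  finally have "vnorm d n v = 1" by (simp add: vnorm_def)
  moreover have "0 \<le> vnorm d n (mvmul d n H v)" by (simp add: vnorm_L2)
  ultimately show ?thesis using op_bound[of d n H v] by simp
qed

lemma FrD:
  assumes "d \<ge> 1"
  shows "sqrt (FrS d n (Dm d n H Op)) \<le> 2 * op_norm d n H * sqrt (FrS d n Op)"
proof -
  define A where "A = (\<lambda>x y. \<Sum>z\<in>cfg d n. (- \<i> * H x z) * Op z y)"
  define B where "B = (\<lambda>x y. \<Sum>w\<in>cfg d n. Op x w * cnj (- \<i> * H y w))"
  have D: "Dm d n H Op = (\<lambda>x y. A x y + B x y)" by (simp add: Dm_def A_def B_def)
  have o: "0 \<le> op_norm d n H" by (rule op_norm_nonneg[OF assms])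
  have sA: "sqrt (FrS d n A) \<le> op_norm d n H * sqrt (FrS d n Op)"
  proof -
    have "sqrt (FrS d n A) \<le> sqrt ((op_norm d n H)\<^sup>2 * FrS d n Op)"
      unfolding A_def by (intro real_sqrt_le_mono FrA)
    also have "\<dots> = op_norm d n H * sqrt (FrS d n Op)" using o by (simp add: real_sqrt_mult)
    finally show ?thesis .
  qed
  have sB: "sqrt (FrS d n B) \<le> op_norm d n H * sqrt (FrS d n Op)"
  proof -
    have "sqrt (FrS d n B) \<le> sqrt ((op_norm d n H)\<^sup>2 * FrS d n Op)"
      unfolding B_def by (intro real_sqrt_le_mono FrB)
    also have "\<dots> = op_norm d n H * sqrt (FrS d n Op)" using o by (simp add: real_sqrt_mult)
    finally show ?thesis .
  qed
  have "sqrt (FrS d n (Dm d n H Op)) \<le> L2_set (\<lambda>p. cmod (A (fst p) (snd p)) + cmod (B (fst p) (snd p))) (cfg d n \<times> cfg d n)"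
    unfolding FrS_L2 D by (intro L2_set_mono norm_triangle_ineq) auto
  also have "\<dots> \<le> sqrt (FrS d n A) + sqrt (FrS d n B)"
    unfolding FrS_L2 by (rule L2_set_triangle_ineq)
  finally show ?thesis using sA sB by simp
qed

lemma hs_FrS:
  assumes "d \<ge> 1" "hs_norm d n Op = 1"
  shows "FrS d n Op = real d ^ n"
proof -
  have c: "Re (cnj a * a) = (cmod a)\<^sup>2" for a
    by (metis Re_complex_of_real complex_norm_square mult.commute)
  have "Re (mtrace d n (mmul d n (madj Op) Op)) = (\<Sum>x\<in>cfg d n. \<Sum>z\<in>cfg d n. (cmod (Op z x))\<^sup>2)"
    by (simp only: mtrace_def mmul_def madj_def Re_sum c)
  also have "\<dots> = FrS d n Op" unfolding FrS_def by (rule sum.swap)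
  finally have e: "Re (mtrace d n (mmul d n (madj Op) Op)) = FrS d n Op" .
  from assms(2) have "Re (mtrace d n (mmul d n (madj Op) Op)) / real d ^ n = 1"
    unfolding hs_norm_def by (simp only: real_sqrt_eq_1_iff)
  then have "Re (mtrace d n (mmul d n (madj Op) Op)) = real d ^ n"
    by (simp add: divide_eq_1_iff)
  then show ?thesis using e by simp
qed

lemma weight_le: "weight n a \<le> n"
proof -
  have "card {i\<in>{..<n}. a i \<noteq> (0, 0)} \<le> card {..<n}" by (intro card_mono) auto
  then show ?thesis by (simp add: weight_def)
qed

theorem mainTheorem16:
  fixes d n :: nat and H Op :: qop
  assumes "d \<ge> 2" and "n \<ge> 1"
    and "hermitian d n H"
    and "hs_norm d n Op = 1"
  shows "\<exists>R. (influence_traj d n H Op has_real_derivative R) (at 0)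
             \<and> \<bar>R\<bar> \<le> 4 * real n * op_norm d n H"
proof -
  have d: "d \<ge> 1" using assms(1) by simp
  define N where "N = real d ^ n"
  have N: "N > 0" using d by (simp add: N_def)
  define TO where "TO a = Tr d n Op a" for a
  define TD where "TD a = Tr d n (Dm d n H Op) a" for a
  define R where "R = (\<Sum>a\<in>labels d n. real (weight n a) * (2 * Re (cnj (TO a) * TD a) / real d ^ (2 * n)))"
  have dR: "(influence_traj d n H Op has_real_derivative R) (at 0)"
    unfolding R_def TO_def TD_def by (rule traj_deriv)
  have dd: "real d ^ (2 * n) = N * N" unfolding N_def by (simp only: mult_2 power_add)
  have FO: "FrS d n Op = N" using hs_FrS[OF d assms(4)] by (simp add: N_def)
  have o: "0 \<le> op_norm d n H" by (rule op_norm_nonneg[OF d])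
  have LO: "L2_set (\<lambda>a. cmod (TO a)) (labels d n) = N"
    unfolding TO_def L2_Tr[OF d] FO using N by (simp add: N_def)
  have LD: "L2_set (\<lambda>a. cmod (TD a)) (labels d n) \<le> 2 * op_norm d n H * N"
  proof -
    have "L2_set (\<lambda>a. cmod (TD a)) (labels d n) = sqrt N * sqrt (FrS d n (Dm d n H Op))"
      unfolding TD_def L2_Tr[OF d] by (simp add: N_def real_sqrt_mult)
    also have "\<dots> \<le> sqrt N * (2 * op_norm d n H * sqrt N)"
      using FrD[OF d, of n H Op] FO N by (intro mult_left_mono) auto
    also have "\<dots> = 2 * op_norm d n H * N" using N by (simp add: real_sqrt_mult_self)
    finally show ?thesis .
  qed
  have "\<bar>R\<bar> \<le> (\<Sum>a\<in>labels d n. \<bar>real (weight n a) * (2 * Re (cnj (TO a) * TD a) / real d ^ (2 * n))\<bar>)"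
    unfolding R_def by (rule sum_abs)
  also have "\<dots> \<le> (\<Sum>a\<in>labels d n. real n * (2 * (cmod (TO a) * cmod (TD a)) / (N * N)))"
  proof (intro sum_mono)
    fix a
    have w: "real (weight n a) \<le> real n" using weight_le by simp
    have "\<bar>Re (cnj (TO a) * TD a)\<bar> \<le> cmod (TO a) * cmod (TD a)"
      using abs_Re_le_cmod[of "cnj (TO a) * TD a"] by (simp add: norm_mult)
    then have "\<bar>2 * Re (cnj (TO a) * TD a) / (N * N)\<bar> \<le> 2 * (cmod (TO a) * cmod (TD a)) / (N * N)"
      using N by (simp add: abs_mult divide_right_mono)
    then show "\<bar>real (weight n a) * (2 * Re (cnj (TO a) * TD a) / real d ^ (2 * n))\<bar>
        \<le> real n * (2 * (cmod (TO a) * cmod (TD a)) / (N * N))"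
      unfolding dd abs_mult using w by (intro mult_mono) auto
  qed
  also have "\<dots> = 2 * real n / (N * N) * (\<Sum>a\<in>labels d n. \<bar>cmod (TO a)\<bar> * \<bar>cmod (TD a)\<bar>)"
    by (simp add: sum_distrib_left) (intro sum.cong refl, simp add: field_simps)
  also have "\<dots> \<le> 2 * real n / (N * N) * (L2_set (\<lambda>a. cmod (TO a)) (labels d n) * L2_set (\<lambda>a. cmod (TD a)) (labels d n))"
    by (intro mult_left_mono L2_set_mult_ineq) (use N in simp)
  also have "\<dots> \<le> 2 * real n / (N * N) * (N * (2 * op_norm d n H * N))"
    unfolding LO using N LD by (intro mult_left_mono) auto
  also have "\<dots> = 4 * real n * op_norm d n H" using N by (simp add: field_simps)
  finally show ?thesis using dR by blast
qed

end
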